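(* Let $\mathscr G=(\mathscr V,\mathscr E)$ be a finite connected graph with $N$ vertices, let $M\ge 0$ be an integer, and let $(Z_t)_{t\in\mathbb N}$ be the uniform saving model on $\mathscr G$ with $M$ coins, started from an arbitrary configuration. Then for every vertex $x\in\mathscr V$ and every $c\in\{0,1,\dots,M\}$, $$\lim_{t\to\infty}P(Z_t(x)=c)=(c+1)\binom{M-c+2N-3}{2N-3}\Big/\binom{M+2N-1}{2N-1}.$$ In particular, when $N$ and $T=M/N$ are large, $\lim_{t\to\infty}P(Z_t(x)=c)\approx \frac{4c}{T^2} e^{-2c/T}$.
   Context: A configuration is a map $\xi:\mathscr V\to\mathbb N$; $\mathscr C_{N,M}$ denotes the set of configurations with $\sum_x\xi(x)=M$. The uniform saving model is the discrete-time Markov chain on $\mathscr C_{N,M}$ evolving as follows: at each time step $t$, an edge $(x,y)\in\mathscr E$ is chosen uniformly at random; independent random variables $U_1$ uniform on $\{0,\dots,Z_t(x)\}$ and $U_2$ uniform on $\{0,\dots,Z_t(y)\}$ are drawn; given $U_1=c_x$, $U_2=c_y$, a random variable $U$ uniform on $\{0,1,\dots,Z_t(x)+Z_t(y)-c_x-c_y\}$ is drawn; then $Z_{t+1}(x)=c_x+U$, $Z_{t+1}(y)=Z_t(x)+Z_t(y)-c_x-U$, and $Z_{t+1}(z)=Z_t(z)$ for $z\notin\{x,y\}$. *)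

theory Defs
  imports "HOL-Probability.Probability"
begin

text \<open>Graph: finite vertex set V, edges as ordered pairs (each undirected edge listed once,
  in an arbitrary orientation; the transition is symmetric in the two endpoints).
  Configurations: functions 'a \<Rightarrow> nat vanishing outside V.\<close>

definition saving_step :: "('a \<times> 'a) set \<Rightarrow> ('a \<Rightarrow> nat) \<Rightarrow> ('a \<Rightarrow> nat) pmf" where
  "saving_step E z =
     do { (x, y) \<leftarrow> pmf_of_set E;
          cx \<leftarrow> pmf_of_set {0 .. z x};
          cy \<leftarrow> pmf_of_set {0 .. z y};
          u \<leftarrow> pmf_of_set {0 .. z x + z y - cx - cy};
          return_pmf (z(x := cx + u, y := z x + z y - cx - u)) }"

fun saving_dist :: "('a \<times> 'a) set \<Rightarrow> ('a \<Rightarrow> nat) \<Rightarrow> nat \<Rightarrow> ('a \<Rightarrow> nat) pmf" where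
  "saving_dist E z0 0 = return_pmf z0"
| "saving_dist E z0 (Suc t) = bind_pmf (saving_dist E z0 t) (saving_step E)"

definition simple_connected_graph :: "'a set \<Rightarrow> ('a \<times> 'a) set \<Rightarrow> bool" where
  "simple_connected_graph V E \<longleftrightarrow>
     finite V \<and> E \<subseteq> V \<times> V \<and> (\<forall>(x, y)\<in>E. x \<noteq> y \<and> (y, x) \<notin> E) \<and>
     (\<forall>x\<in>V. \<forall>y\<in>V. (x, y) \<in> (E \<union> E\<inverse>)\<^sup>*)"

end

theory Submission
  imports Defs
begin

lemma hockey: "(\<Sum>i\<le>n. (i + m) choose m) = (n + m + 1) choose (m + 1)"
proof (induction n)
  case 0 then show ?case by simp
next
  case (Suc n)
  have "(\<Sum>i\<le>Suc n. (i + m) choose m) = ((n + m + 1) choose (m + 1)) + ((Suc n + m) choose m)"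
    using Suc by simp
  also have "\<dots> = (Suc n + m + 1) choose (m + 1)"
    by (simp add: add.commute)
  finally show ?case .
qed

lemma wsum_choose: "(\<Sum>j\<le>M. (j + 1) * ((M - j + m) choose m)) = (M + m + 2) choose (m + 2)"
proof (induction M)
  case 0 then show ?case by simp
next
  case (Suc M)
  have A: "(\<Sum>j\<le>Suc M. (j + 1) * ((Suc M - j + m) choose m))
      = (\<Sum>j\<le>M. (Suc j + 1) * ((Suc M - Suc j + m) choose m)) + ((Suc M + m) choose m)"
    by (subst sum.atMost_Suc_shift) simp
  have B: "(\<Sum>j\<le>M. (Suc j + 1) * ((Suc M - Suc j + m) choose m)) = (\<Sum>j\<le>M. (j + 1) * ((M - j + m) choose m)) + (\<Sum>j\<le>M. ((M - j + m) choose m))"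
    by (simp add: sum.distrib)
  have C: "(\<Sum>j\<le>M. ((M - j + m) choose m)) = (\<Sum>i\<le>M. (i + m) choose m)"
    by (rule sum.reindex_bij_witness[of _ "\<lambda>i. M - i" "\<lambda>i. M - i"]) auto
  have D: "(\<Sum>i\<le>M. (i + m) choose m) + ((Suc M + m) choose m) = (\<Sum>i\<le>Suc M. (i + m) choose m)"
    by (simp only: sum.atMost_Suc)
  note D2 = hockey[where n="Suc M" and m=m]
  have E: "((M + m + 2) choose (m + 2)) + ((Suc M + m + 1) choose (m + 1)) = (Suc M + m + 2) choose (m + 2)"
    by (simp add: numeral_2_eq_2)
  show ?case using A B C D D2 E Suc.IH by linarith
qed


definition estep :: "'a \<Rightarrow> 'a \<Rightarrow> ('a \<Rightarrow> nat) \<Rightarrow> ('a \<Rightarrow> nat) pmf" where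
  "estep a b z = do { cx \<leftarrow> pmf_of_set {0 .. z a};
          cy \<leftarrow> pmf_of_set {0 .. z b};
          u \<leftarrow> pmf_of_set {0 .. z a + z b - cx - cy};
          return_pmf (z(a := cx + u, b := z a + z b - cx - u)) }"

lemma saving_step_estep: "saving_step E z = pmf_of_set E \<bind> (\<lambda>(a, b). estep a b z)"
  unfolding saving_step_def estep_def by simp

definition agree :: "'a \<Rightarrow> 'a \<Rightarrow> ('a \<Rightarrow> nat) \<Rightarrow> ('a \<Rightarrow> nat) \<Rightarrow> bool" where
  "agree a b z \<eta> \<longleftrightarrow> (\<forall>v. v \<noteq> a \<longrightarrow> v \<noteq> b \<longrightarrow> \<eta> v = z v) \<and> \<eta> a + \<eta> b = z a + z b"

definition Dsum :: "'a \<Rightarrow> 'a \<Rightarrow> ('a \<Rightarrow> nat) \<Rightarrow> ('a \<Rightarrow> nat) \<Rightarrow> real" where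
  "Dsum a b z \<eta> = (\<Sum>cx\<in>{0..min (z a) (\<eta> a)}. \<Sum>cy\<in>{0..min (z b) (\<eta> b)}. 1 / real (z a + z b - cx - cy + 1))"

lemma estep_inner:
  assumes ab: "a \<noteq> b" and cx: "cx \<le> z a" and cy: "cy \<le> z b"
  shows "(\<Sum>u\<in>{0..z a + z b - cx - cy}. indicator {\<eta>} (z(a := cx + u, b := z a + z b - cx - u))) / real (card {0..z a + z b - cx - cy})
       = (if agree a b z \<eta> \<and> cx \<le> \<eta> a \<and> cy \<le> \<eta> b then 1 / real (z a + z b - cx - cy + 1) else 0)"
proof -
  let ?C = "agree a b z \<eta> \<and> cx \<le> \<eta> a \<and> cy \<le> \<eta> b"
  have ind: "indicator {\<eta>} (z(a := cx + u, b := z a + z b - cx - u)) = (if u = \<eta> a - cx \<and> ?C then 1 else (0::real))"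
    if "u \<in> {0..z a + z b - cx - cy}" for u
  proof -
    have e1: "(z(a := cx + u, b := z a + z b - cx - u) = \<eta>) \<longleftrightarrow>
       (\<eta> a = cx + u \<and> \<eta> b = z a + z b - cx - u \<and> (\<forall>v. v \<noteq> a \<longrightarrow> v \<noteq> b \<longrightarrow> \<eta> v = z v))"
      using ab by (auto simp: fun_eq_iff)
    have "(z(a := cx + u, b := z a + z b - cx - u) = \<eta>) \<longleftrightarrow> (u = \<eta> a - cx \<and> ?C)"
      unfolding e1 agree_def using that cx cy by auto
    then show ?thesis by (auto simp: indicator_def)
  qed
  have "(\<Sum>u\<in>{0..z a + z b - cx - cy}. indicator {\<eta>} (z(a := cx + u, b := z a + z b - cx - u))) / real (card {0..z a + z b - cx - cy})
      = (\<Sum>u\<in>{0..z a + z b - cx - cy}. indicator {\<eta>} (z(a := cx + u, b := z a + z b - cx - u)) / real (card {0..z a + z b - cx - cy}))"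
    by (rule sum_divide_distrib)
  also have "\<dots> = (\<Sum>u\<in>{0..z a + z b - cx - cy}. (if u = \<eta> a - cx then (if ?C then 1 else 0) / real (z a + z b - cx - cy + 1) else 0))"
  proof (intro sum.cong refl)
    fix u assume "u \<in> {0..z a + z b - cx - cy}"
    then show "indicator {\<eta>} (z(a := cx + u, b := z a + z b - cx - u)) / real (card {0..z a + z b - cx - cy})
        = (if u = \<eta> a - cx then (if ?C then 1 else 0) / real (z a + z b - cx - cy + 1) else 0)"
      using ind[of u] by simp
  qed
  also have "\<dots> = (if \<eta> a - cx \<in> {0..z a + z b - cx - cy} then (if ?C then 1 else 0) / real (z a + z b - cx - cy + 1) else 0)"
    by (rule sum.delta[OF finite_atLeastAtMost])
  also have "\<dots> = (if ?C then 1 / real (z a + z b - cx - cy + 1) else 0)"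
    using cx cy unfolding agree_def by auto
  finally show ?thesis .
qed

lemma ne: "{0..n::nat} \<noteq> {}" by simp

lemma pmf_estep:
  assumes ab: "a \<noteq> b"
  shows "pmf (estep a b z) \<eta> = (if agree a b z \<eta> then Dsum a b z \<eta> else 0) / (real (z a + 1) * real (z b + 1))"
proof -
  have "pmf (estep a b z) \<eta> = (\<Sum>cx\<in>{0..z a}. (\<Sum>cy\<in>{0..z b}.
      (\<Sum>u\<in>{0..z a + z b - cx - cy}. indicator {\<eta>} (z(a := cx + u, b := z a + z b - cx - u))) / real (card {0..z a + z b - cx - cy}))
       / real (card {0..z b})) / real (card {0..z a})"
    unfolding estep_def by (simp only: pmf_bind_pmf_of_set ne finite_atLeastAtMost pmf_return not_False_eq_True)
  also have "\<dots> = (\<Sum>cx\<in>{0..z a}. (\<Sum>cy\<in>{0..z b}.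
      (if agree a b z \<eta> \<and> cx \<le> \<eta> a \<and> cy \<le> \<eta> b then 1 / real (z a + z b - cx - cy + 1) else 0)) / real (z b + 1)) / real (z a + 1)"
    apply (rule arg_cong2[where f="(/)"], rule sum.cong[OF refl], rule arg_cong2[where f="(/)"], rule sum.cong[OF refl])
       apply (rule estep_inner[OF ab]; simp)
      apply simp_all
    done
  also have "\<dots> = (\<Sum>cx\<in>{0..z a}. (\<Sum>cy\<in>{0..z b}.
      (if agree a b z \<eta> \<and> cx \<le> \<eta> a \<and> cy \<le> \<eta> b then 1 / real (z a + z b - cx - cy + 1) else 0))) / (real (z a + 1) * real (z b + 1))"
    by (simp add: sum_divide_distrib[symmetric] divide_divide_eq_left mult.commute)
  also have "(\<Sum>cx\<in>{0..z a}. (\<Sum>cy\<in>{0..z b}.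
      (if agree a b z \<eta> \<and> cx \<le> \<eta> a \<and> cy \<le> \<eta> b then 1 / real (z a + z b - cx - cy + 1) else 0)))
      = (if agree a b z \<eta> then Dsum a b z \<eta> else 0)"
  proof (cases "agree a b z \<eta>")
    case False then show ?thesis by simp
  next
    case True
    have "(\<Sum>cx\<in>{0..z a}. (\<Sum>cy\<in>{0..z b}.
      (if cx \<le> \<eta> a \<and> cy \<le> \<eta> b then 1 / real (z a + z b - cx - cy + 1) else 0)))
      = (\<Sum>cx\<in>{0..z a}. if cx \<le> \<eta> a then (\<Sum>cy\<in>{0..z b}.
      (if cy \<le> \<eta> b then 1 / real (z a + z b - cx - cy + 1) else 0)) else 0)"
      by (intro sum.cong refl) auto
    also have "\<dots> = (\<Sum>cx\<in>{0..z a} \<inter> {cx. cx \<le> \<eta> a}. (\<Sum>cy\<in>{0..z b} \<inter> {cy. cy \<le> \<eta> b}. 1 / real (z a + z b - cx - cy + 1)))"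
      by (simp only: sum.inter_restrict finite_atLeastAtMost mem_Collect_eq)
    also have "\<dots> = Dsum a b z \<eta>"
    proof -
      have "\<And>p q. {0..p} \<inter> {c. c \<le> q} = {0..min p (q::nat)}" by auto
      then show ?thesis unfolding Dsum_def by simp
    qed
    finally show ?thesis using True by simp
  qed
  finally show ?thesis .
qed


definition cfg :: "'a set \<Rightarrow> nat \<Rightarrow> ('a \<Rightarrow> nat) set" where
  "cfg V M = {z. (\<forall>v. v \<notin> V \<longrightarrow> z v = 0) \<and> sum z V = M}"

definition wt :: "'a set \<Rightarrow> ('a \<Rightarrow> nat) \<Rightarrow> nat" where
  "wt V z = (\<Prod>v\<in>V. z v + 1)"

lemma agree_sym: "agree a b z \<eta> = agree a b \<eta> z"
  unfolding agree_def by auto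

lemma wt_split:
  assumes "finite V" "a \<in> V" "b \<in> V" "a \<noteq> b"
  shows "wt V z = (z a + 1) * (z b + 1) * wt (V - {a, b}) z"
proof -
  have "wt V z = (z a + 1) * wt (V - {a}) z"
    unfolding wt_def using assms by (simp add: prod.remove)
  also have "wt (V - {a}) z = (z b + 1) * wt (V - {a} - {b}) z"
    unfolding wt_def using assms by (subst prod.remove[of _ b]) auto
  also have "V - {a} - {b} = V - {a, b}" by auto
  finally show ?thesis by (simp only: mult.assoc)
qed

lemma estep_balance:
  assumes "finite V" "a \<in> V" "b \<in> V" "a \<noteq> b"
  shows "real (wt V z) * pmf (estep a b z) \<eta> = real (wt V \<eta>) * pmf (estep a b \<eta>) z"
proof (cases "agree a b z \<eta>")
  case False
  then have "\<not> agree a b \<eta> z" by (simp add: agree_sym)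
  with False show ?thesis using assms by (simp add: pmf_estep)
next
  case True
  then have T2: "agree a b \<eta> z" by (simp add: agree_sym)
  have rest: "wt (V - {a, b}) z = wt (V - {a, b}) \<eta>"
    unfolding wt_def using True unfolding agree_def by (intro prod.cong) auto
  have D: "Dsum a b z \<eta> = Dsum a b \<eta> z"
    unfolding Dsum_def using True unfolding agree_def by (simp add: min.commute)
  have pz: "(real (z a + 1) * real (z b + 1)) > 0" by simp
  have p\<eta>: "(real (\<eta> a + 1) * real (\<eta> b + 1)) > 0" by simp
  show ?thesis
    unfolding pmf_estep[OF assms(4)] wt_split[OF assms] using True T2 rest D pz p\<eta>
    by (simp add: field_simps)
qed

lemma pmf_saving_step:
  assumes "finite E" "E \<noteq> {}"
  shows "pmf (saving_step E z) \<eta> = (\<Sum>e\<in>E. pmf (estep (fst e) (snd e) z) \<eta>) / real (card E)"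
  unfolding saving_step_estep using assms by (simp add: pmf_bind_pmf_of_set split_beta)

lemma step_balance:
  assumes "finite V" "E \<subseteq> V \<times> V" "\<forall>(a, b)\<in>E. a \<noteq> b" "E \<noteq> {}"
  shows "real (wt V z) * pmf (saving_step E z) \<eta> = real (wt V \<eta>) * pmf (saving_step E \<eta>) z"
proof -
  have fE: "finite E" using assms(1,2) finite_subset by blast
  have "real (wt V z) * (\<Sum>e\<in>E. pmf (estep (fst e) (snd e) z) \<eta>) = real (wt V \<eta>) * (\<Sum>e\<in>E. pmf (estep (fst e) (snd e) \<eta>) z)"
    unfolding sum_distrib_left
  proof (intro sum.cong refl)
    fix e assume "e \<in> E"
    then show "real (wt V z) * pmf (estep (fst e) (snd e) z) \<eta> = real (wt V \<eta>) * pmf (estep (fst e) (snd e) \<eta>) z"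
      using assms by (intro estep_balance) auto
  qed
  then show ?thesis unfolding pmf_saving_step[OF fE assms(4)] by (simp add: field_simps)
qed

lemma sum_upd2:
  assumes "finite V" "a \<in> V" "b \<in> V" "a \<noteq> b" "p + q = z a + z b"
  shows "sum (z(a := p, b := q)) V = sum z V"
proof -
  have "\<And>f. sum f V = f a + f b + sum f (V - {a} - {b})"
    using assms by (simp add: sum.remove[of V a] sum.remove[of "V - {a}" b] add.assoc)
  from this[of "z(a := p, b := q)"] this[of z] have
    "sum (z(a := p, b := q)) V = p + q + sum (z(a := p, b := q)) (V - {a} - {b})"
    "sum z V = z a + z b + sum z (V - {a} - {b})" using assms by auto
  moreover have "sum (z(a := p, b := q)) (V - {a} - {b}) = sum z (V - {a} - {b})"
    by (intro sum.cong) auto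
  ultimately show ?thesis using assms by simp
qed

lemma set_estep:
  "set_pmf (estep a b z) = {z(a := cx + u, b := z a + z b - cx - u) | cx cy u. cx \<le> z a \<and> cy \<le> z b \<and> u \<le> z a + z b - cx - cy}"
  unfolding estep_def apply (auto simp: set_pmf_of_set)
   apply blast
  apply fastforce
  done

lemma set_estep_cfg:
  assumes "finite V" "a \<in> V" "b \<in> V" "a \<noteq> b" "z \<in> cfg V M"
  shows "set_pmf (estep a b z) \<subseteq> cfg V M"
proof
  fix z' assume "z' \<in> set_pmf (estep a b z)"
  then obtain cx cy u where z': "z' = z(a := cx + u, b := z a + z b - cx - u)" and
     c: "cx \<le> z a" "cy \<le> z b" "u \<le> z a + z b - cx - cy"
    unfolding set_estep by blast
  have "sum z' V = sum z V" unfolding z' using assms c by (intro sum_upd2) auto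
  then show "z' \<in> cfg V M" using assms z' unfolding cfg_def by auto
qed

lemma set_saving_step:
  assumes "finite E" "E \<noteq> {}"
  shows "set_pmf (saving_step E z) = (\<Union>(a, b)\<in>E. set_pmf (estep a b z))"
  unfolding saving_step_estep using assms by (simp add: split_beta)


lemma cfg_finite:
  assumes "finite V" shows "finite (cfg V M)"
proof -
  have "cfg V M \<subseteq> {f. \<forall>x. (x \<in> V \<longrightarrow> f x \<in> {0..M}) \<and> (x \<notin> V \<longrightarrow> f x = 0)}"
    unfolding cfg_def using assms by (auto intro: member_le_sum)
  then show ?thesis
    by (rule finite_subset) (intro finite_set_of_finite_funs assms finite_atLeastAtMost)
qed

lemma cfg_insert_sum:
  fixes f :: "('a \<Rightarrow> nat) \<Rightarrow> 'b::comm_monoid_add"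
  assumes "finite V" "a \<notin> V"
  shows "(\<Sum>z\<in>cfg (insert a V) M. f z) = (\<Sum>j\<le>M. \<Sum>\<zeta>\<in>cfg V (M - j). f (\<zeta>(a := j)))"
proof -
  have fin: "\<And>j. finite (cfg V (M - j))" using assms cfg_finite by blast
  have "(\<Sum>j\<le>M. \<Sum>\<zeta>\<in>cfg V (M - j). f (\<zeta>(a := j))) = (\<Sum>p\<in>Sigma {..M} (\<lambda>j. cfg V (M - j)). f ((snd p)(a := fst p)))"
    by (subst sum.Sigma) (simp_all add: fin split_beta)
  also have "\<dots> = (\<Sum>z\<in>cfg (insert a V) M. f z)"
  proof (rule sum.reindex_bij_witness[of _ "\<lambda>z. (z a, z(a := 0))" "\<lambda>p. (snd p)(a := fst p)"])
    fix z assume z: "z \<in> cfg (insert a V) M"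
    have s: "sum z (insert a V) = z a + sum z V" using assms by simp
    have s2: "sum (z(a:=0)) V = sum z V" using assms by (intro sum.cong) auto
    show "(snd (z a, z(a := 0)))(a := fst (z a, z(a := 0))) = z" by simp
    show "(z a, z(a := 0)) \<in> Sigma {..M} (\<lambda>j. cfg V (M - j))"
      using z s s2 unfolding cfg_def by auto
  next
    fix p assume p: "p \<in> Sigma {..M} (\<lambda>j. cfg V (M - j))"
    obtain j \<zeta> where pj: "p = (j, \<zeta>)" by (cases p)
    have za: "\<zeta> a = 0" using p pj assms unfolding cfg_def by auto
    have s2: "sum (\<zeta>(a:=j)) V = sum \<zeta> V" using assms by (intro sum.cong) auto
    show "(((snd p)(a := fst p)) a, ((snd p)(a := fst p))(a := 0)) = p"
      using pj za by (auto simp: fun_eq_iff)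
    show "(snd p)(a := fst p) \<in> cfg (insert a V) M"
      using p pj s2 assms unfolding cfg_def by auto
    show "f ((snd p)(a := fst p)) = f ((snd p)(a := fst p))" by simp
  qed
  finally show ?thesis by simp
qed

lemma wt_upd:
  assumes "finite V" "a \<notin> V" shows "wt (insert a V) (\<zeta>(a := j)) = (j + 1) * wt V \<zeta>"
proof -
  have "(\<Prod>v\<in>V. (\<zeta>(a := j)) v + 1) = (\<Prod>v\<in>V. \<zeta> v + 1)" using assms by (intro prod.cong) auto
  then show ?thesis using assms unfolding wt_def by simp
qed

lemma wt_total:
  assumes "finite V" "V \<noteq> {}"
  shows "(\<Sum>z\<in>cfg V M. wt V z) = (M + 2 * card V - 1) choose (2 * card V - 1)"
  using assms
proof (induction V arbitrary: M rule: finite_ne_induct)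
  case (singleton a)
  have "cfg {a} M = {(\<lambda>_. 0)(a := M)}" unfolding cfg_def by (auto simp: fun_eq_iff)
  then show ?case by (simp add: wt_def)
next
  case (insert a V)
  have "(\<Sum>z\<in>cfg (insert a V) M. wt (insert a V) z) = (\<Sum>j\<le>M. \<Sum>\<zeta>\<in>cfg V (M - j). (j + 1) * wt V \<zeta>)"
    using insert by (simp add: cfg_insert_sum wt_upd)
  also have "\<dots> = (\<Sum>j\<le>M. (j + 1) * ((M - j + (2 * card V - 1)) choose (2 * card V - 1)))"
  proof (intro sum.cong refl)
    fix j assume "j \<in> {..M}"
    have "card V > 0" using insert card_gt_0_iff by blast
    then show "(\<Sum>\<zeta>\<in>cfg V (M - j). (j + 1) * wt V \<zeta>) = (j + 1) * ((M - j + (2 * card V - 1)) choose (2 * card V - 1))"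
    proof -
      have e1: "(\<Sum>\<zeta>\<in>cfg V (M - j). (j + 1) * wt V \<zeta>) = (j + 1) * sum (wt V) (cfg V (M - j))"
        by (rule sum_distrib_left[symmetric])
      have e2: "M - j + (2 * card V - 1) = M - j + 2 * card V - 1" using \<open>card V > 0\<close> by simp
      show ?thesis unfolding e1 insert.IH e2 ..
    qed
  qed
  also have "\<dots> = (M + (2 * card V - 1) + 2) choose ((2 * card V - 1) + 2)" by (rule wsum_choose)
  also have "\<dots> = (M + 2 * card (insert a V) - 1) choose (2 * card (insert a V) - 1)"
    using insert card_gt_0_iff[of V] by simp
  finally show ?case .
qed

lemma wt_marg:
  assumes "finite V" "x \<in> V" "c \<le> M"
  shows "(\<Sum>z\<in>cfg V M \<inter> {z. z x = c}. wt V z) = (c + 1) * (\<Sum>\<zeta>\<in>cfg (V - {x}) (M - c). wt (V - {x}) \<zeta>)"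
proof -
  have V: "V = insert x (V - {x})" using assms by auto
  have fin: "finite (V - {x})" using assms by simp
  have "(\<Sum>z\<in>cfg V M \<inter> {z. z x = c}. wt V z) = (\<Sum>z\<in>cfg V M. if z x = c then wt V z else 0)"
    using cfg_finite[OF assms(1)] by (simp add: sum.inter_restrict)
  also have "\<dots> = (\<Sum>j\<le>M. \<Sum>\<zeta>\<in>cfg (V - {x}) (M - j). if j = c then wt V (\<zeta>(x := j)) else 0)"
    by (subst V, subst cfg_insert_sum) (use fin in \<open>auto simp flip: V\<close>)
  also have "\<dots> = (\<Sum>j\<le>M. if j = c then (\<Sum>\<zeta>\<in>cfg (V - {x}) (M - j). wt V (\<zeta>(x := j))) else 0)"
    by (intro sum.cong) auto
  also have "\<dots> = (\<Sum>\<zeta>\<in>cfg (V - {x}) (M - c). wt V (\<zeta>(x := c)))"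
    using assms by (simp add: sum.delta)
  also have "\<dots> = (\<Sum>\<zeta>\<in>cfg (V - {x}) (M - c). (c + 1) * wt (V - {x}) \<zeta>)"
    by (intro sum.cong refl) (metis V fin wt_upd Diff_iff singletonI)
  finally show ?thesis by (simp add: sum_distrib_left)
qed

definition Rel :: "('a \<times> 'a) set \<Rightarrow> (('a \<Rightarrow> nat) \<times> ('a \<Rightarrow> nat)) set" where
  "Rel E = {(z, z'). z' \<in> set_pmf (saving_step E z)}"

lemma mem_set_estep:
  "cx \<le> z a \<Longrightarrow> cy \<le> z b \<Longrightarrow> u \<le> z a + z b - cx - cy \<Longrightarrow>
   z(a := cx + u, b := z a + z b - cx - u) \<in> set_pmf (estep a b z)"
  unfolding set_estep by blast

lemma Rel_estep:
  assumes "finite E" "(a, b) \<in> E" "z' \<in> set_pmf (estep a b z)"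
  shows "(z, z') \<in> Rel E"
  using assms unfolding Rel_def by (subst set_saving_step) auto

lemma Rel_refl:
  assumes "finite E" "(a, b) \<in> E"
  shows "(z, z) \<in> Rel E"
proof -
  have "z(a := z a + 0, b := z a + z b - z a - 0) \<in> set_pmf (estep a b z)"
    by (rule mem_set_estep) auto
  moreover have "z(a := z a + 0, b := z a + z b - z a - 0) = z" by (simp add: fun_eq_iff)
  ultimately show ?thesis using Rel_estep[OF assms] by simp
qed

lemma Rel_move:
  assumes "finite E" "\<forall>(a, b)\<in>E. a \<noteq> b" "(v, w) \<in> E \<union> E\<inverse>"
  shows "(z, z(v := 0, w := z v + z w)) \<in> Rel E"
proof (cases "(v, w) \<in> E")
  case True
  have "z(v := 0 + 0, w := z v + z w - 0 - 0) \<in> set_pmf (estep v w z)"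
    by (rule mem_set_estep) auto
  then show ?thesis using Rel_estep[OF assms(1) True] by simp
next
  case False
  then have wv: "(w, v) \<in> E" using assms by auto
  then have "v \<noteq> w" using assms by auto
  have "z(w := 0 + (z w + z v), v := z w + z v - 0 - (z w + z v)) \<in> set_pmf (estep w v z)"
    by (rule mem_set_estep) auto
  moreover have "z(w := 0 + (z w + z v), v := z w + z v - 0 - (z w + z v)) = z(v := 0, w := z v + z w)"
    using \<open>v \<noteq> w\<close> by (auto simp: fun_eq_iff)
  ultimately show ?thesis using Rel_estep[OF assms(1) wv] by simp
qed

lemma drain:
  assumes fE: "finite E" and irr: "\<forall>(a, b)\<in>E. a \<noteq> b" and "(v, x0) \<in> (E \<union> E\<inverse>)\<^sup>*"
  shows "\<exists>z'. (z, z') \<in> (Rel E)\<^sup>* \<and> (v \<noteq> x0 \<longrightarrow> z' v = 0) \<and> (\<forall>u. u \<noteq> x0 \<and> z u = 0 \<longrightarrow> z' u = 0)"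
  using assms(3)
proof (induction arbitrary: z rule: converse_rtrancl_induct)
  case base
  show ?case by (rule exI[of _ z]) auto
next
  case (step v w)
  show ?case
  proof (cases "v = x0")
    case True then show ?thesis by (intro exI[of _ z]) auto
  next
    case False
    have vw: "v \<noteq> w" using step.hyps(1) irr by auto
    define z1 where "z1 = z(v := 0, w := z v + z w)"
    have r1: "(z, z1) \<in> Rel E" unfolding z1_def by (rule Rel_move[OF fE irr step.hyps(1)])
    obtain z' where z': "(z1, z') \<in> (Rel E)\<^sup>*" "w \<noteq> x0 \<longrightarrow> z' w = 0"
        "\<forall>u. u \<noteq> x0 \<and> z1 u = 0 \<longrightarrow> z' u = 0"
      using step.IH by blast
    have "(z, z') \<in> (Rel E)\<^sup>*" using r1 z'(1) by (rule converse_rtrancl_into_rtrancl)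
    moreover have "z' v = 0" using z'(3) False vw unfolding z1_def by auto
    moreover have "\<forall>u. u \<noteq> x0 \<and> z u = 0 \<longrightarrow> z' u = 0"
    proof (intro allI impI)
      fix u assume u: "u \<noteq> x0 \<and> z u = 0"
      show "z' u = 0"
      proof (cases "u = w")
        case True then show ?thesis using z'(2) u by simp
      next
        case False then show ?thesis using z'(3) u unfolding z1_def by auto
      qed
    qed
    ultimately show ?thesis by blast
  qed
qed

lemma gather:
  assumes fE: "finite E" and irr: "\<forall>(a, b)\<in>E. a \<noteq> b" and "finite Vs"
    and conn: "\<forall>v\<in>Vs. (v, x0) \<in> (E \<union> E\<inverse>)\<^sup>*"
    and "\<forall>u. u \<notin> Vs \<and> u \<noteq> x0 \<longrightarrow> z u = 0"
  shows "\<exists>z'. (z, z') \<in> (Rel E)\<^sup>* \<and> (\<forall>u. u \<noteq> x0 \<longrightarrow> z' u = 0)"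
  using assms(3-5)
proof (induction Vs arbitrary: z rule: finite_induct)
  case empty then show ?case by auto
next
  case (insert a Vs)
  obtain z1 where z1: "(z, z1) \<in> (Rel E)\<^sup>*" "a \<noteq> x0 \<longrightarrow> z1 a = 0" "\<forall>u. u \<noteq> x0 \<and> z u = 0 \<longrightarrow> z1 u = 0"
    using drain[OF fE irr, of a x0 z] insert.prems by auto
  have "\<forall>u. u \<notin> Vs \<and> u \<noteq> x0 \<longrightarrow> z1 u = 0"
  proof (intro allI impI)
    fix u assume u: "u \<notin> Vs \<and> u \<noteq> x0"
    show "z1 u = 0"
    proof (cases "u = a")
      case True then show ?thesis using z1(2) u by simp
    next
      case False
      then have "z u = 0" using insert.prems(2) u by auto
      then show ?thesis using z1(3) u by auto
    qed
  qed
  moreover have "\<forall>v\<in>Vs. (v, x0) \<in> (E \<union> E\<inverse>)\<^sup>*" using insert.prems(1) by auto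
  ultimately obtain z' where "(z1, z') \<in> (Rel E)\<^sup>*" "\<forall>u. u \<noteq> x0 \<longrightarrow> z' u = 0"
    using insert.IH by blast
  then show ?case using z1(1) by (meson rtrancl_trans)
qed

lemma Rel_cfg:
  assumes "finite V" "E \<subseteq> V \<times> V" "\<forall>(a, b)\<in>E. a \<noteq> b" "E \<noteq> {}"
    and "z \<in> cfg V M" "(z, z') \<in> Rel E"
  shows "z' \<in> cfg V M"
proof -
  have fE: "finite E" using assms(1,2) finite_subset by blast
  obtain a b where ab: "(a, b) \<in> E" "z' \<in> set_pmf (estep a b z)"
    using assms(6) unfolding Rel_def by (auto simp: set_saving_step[OF fE assms(4)])
  then show ?thesis using set_estep_cfg[of V a b z M] assms by auto
qed

lemma Rel_star_cfg:
  assumes "finite V" "E \<subseteq> V \<times> V" "\<forall>(a, b)\<in>E. a \<noteq> b" "E \<noteq> {}"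
    and "(z, z') \<in> (Rel E)\<^sup>*" "z \<in> cfg V M"
  shows "z' \<in> cfg V M"
  using assms(5,6) by induction (use Rel_cfg[OF assms(1-4)] in blast)+

lemma reach_star:
  assumes "finite V" "E \<subseteq> V \<times> V" "\<forall>(a, b)\<in>E. a \<noteq> b" "E \<noteq> {}"
    and conn: "\<forall>v\<in>V. (v, x0) \<in> (E \<union> E\<inverse>)\<^sup>*" and "x0 \<in> V"
    and "z \<in> cfg V M"
  shows "(z, (\<lambda>_. 0)(x0 := M)) \<in> (Rel E)\<^sup>*"
proof -
  have fE: "finite E" using assms(1,2) finite_subset by blast
  obtain z' where z': "(z, z') \<in> (Rel E)\<^sup>*" "\<forall>u. u \<noteq> x0 \<longrightarrow> z' u = 0"
    using gather[OF fE assms(3) assms(1) conn, of z] assms(7) unfolding cfg_def by auto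
  have c: "z' \<in> cfg V M" using Rel_star_cfg[OF assms(1-4) z'(1) assms(7)] .
  have "sum z' V = z' x0"
    using assms(1,6) z'(2) by (subst sum.remove[of V x0]) (auto intro: sum.neutral)
  then have "z' x0 = M" using c unfolding cfg_def by simp
  then have "z' = (\<lambda>_. 0)(x0 := M)" using z'(2) by (auto simp: fun_eq_iff)
  then show ?thesis using z'(1) by simp
qed

lemma pmf_bind_fin:
  assumes "finite S" "set_pmf q \<subseteq> S"
  shows "pmf (q \<bind> f) \<eta> = (\<Sum>\<xi>\<in>S. pmf q \<xi> * pmf (f \<xi>) \<eta>)"
proof -
  have "pmf (q \<bind> f) \<eta> = (\<Sum>\<xi>\<in>S. pmf (f \<xi>) \<eta> * pmf q \<xi>)"
    unfolding pmf_bind using assms by (intro integral_measure_pmf_real) auto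
  then show ?thesis by (simp add: mult.commute)
qed

lemma dist_add: "saving_dist E z0 (t + k) = saving_dist E z0 t \<bind> (\<lambda>\<xi>. saving_dist E \<xi> k)"
proof (induction k)
  case 0 then show ?case by (simp add: bind_return_pmf')
next
  case (Suc k) then show ?case by (simp add: bind_assoc_pmf)
qed

locale sm =
  fixes V :: "'a set" and E :: "('a \<times> 'a) set"
  assumes finV: "finite V" and EV: "E \<subseteq> V \<times> V" and irr: "\<forall>(a, b)\<in>E. a \<noteq> b" and Ene: "E \<noteq> {}"
begin

lemma fE: "finite E" using finV EV finite_subset by blast

lemma set_step_cfg: "z \<in> cfg V M \<Longrightarrow> set_pmf (saving_step E z) \<subseteq> cfg V M"
  using Rel_cfg[OF finV EV irr Ene] unfolding Rel_def by auto

lemma set_dist: "z \<in> cfg V M \<Longrightarrow> set_pmf (saving_dist E z t) \<subseteq> cfg V M"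
  by (induction t) (use set_step_cfg in auto)

lemma relpow_set: "(\<xi>, \<eta>) \<in> (Rel E) ^^ k \<Longrightarrow> \<eta> \<in> set_pmf (saving_dist E \<xi> k)"
proof (induction k arbitrary: \<eta>)
  case 0 then show ?case by simp
next
  case (Suc k)
  then obtain \<zeta> where "(\<xi>, \<zeta>) \<in> (Rel E) ^^ k" "(\<zeta>, \<eta>) \<in> Rel E" by auto
  then show ?case using Suc.IH unfolding Rel_def by auto
qed

lemma relpow_pad:
  assumes "(\<xi>, \<eta>) \<in> (Rel E) ^^ k" "k \<le> K"
  shows "(\<xi>, \<eta>) \<in> (Rel E) ^^ K"
proof -
  obtain a b where ab: "(a, b) \<in> E" using Ene by auto
  have "(\<xi>, \<eta>) \<in> (Rel E) ^^ (k + j)" for j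
  proof (induction j)
    case 0 then show ?case using assms by simp
  next
    case (Suc j)
    then show ?case using Rel_refl[OF fE ab, of \<eta>] by auto
  qed
  from this[of "K - k"] show ?thesis using assms by simp
qed

lemma stationary_k:
  assumes S: "S = cfg V M" and \<pi>: "\<forall>\<eta>\<in>S. (\<Sum>\<xi>\<in>S. \<pi> \<xi> * pmf (saving_step E \<xi>) \<eta>) = \<pi> \<eta>"
  shows "\<eta> \<in> S \<Longrightarrow> (\<Sum>\<xi>\<in>S. \<pi> \<xi> * pmf (saving_dist E \<xi> k) \<eta>) = \<pi> \<eta>"
proof (induction k arbitrary: \<eta>)
  case 0
  have "(\<Sum>\<xi>\<in>S. \<pi> \<xi> * pmf (saving_dist E \<xi> 0) \<eta>) = (\<Sum>\<xi>\<in>S. if \<xi> = \<eta> then \<pi> \<xi> else 0)"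
    by (intro sum.cong) (auto simp: indicator_def)
  then show ?case using 0 S cfg_finite[OF finV] by simp
next
  case (Suc k)
  have fS: "finite S" using S cfg_finite[OF finV] by simp
  have "(\<Sum>\<xi>\<in>S. \<pi> \<xi> * pmf (saving_dist E \<xi> (Suc k)) \<eta>)
      = (\<Sum>\<xi>\<in>S. \<pi> \<xi> * (\<Sum>\<zeta>\<in>S. pmf (saving_dist E \<xi> k) \<zeta> * pmf (saving_step E \<zeta>) \<eta>))"
    by (intro sum.cong refl) (use S set_dist fS in \<open>simp add: pmf_bind_fin\<close>)
  also have "\<dots> = (\<Sum>\<zeta>\<in>S. (\<Sum>\<xi>\<in>S. \<pi> \<xi> * pmf (saving_dist E \<xi> k) \<zeta>) * pmf (saving_step E \<zeta>) \<eta>)"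
    by (unfold sum_distrib_left sum_distrib_right, subst sum.swap, simp add: mult.assoc)
  also have "\<dots> = (\<Sum>\<zeta>\<in>S. \<pi> \<zeta> * pmf (saving_step E \<zeta>) \<eta>)"
    by (intro sum.cong refl) (simp add: Suc.IH)
  also have "\<dots> = \<pi> \<eta>" using \<pi> Suc.prems by simp
  finally show ?case .
qed

lemma converge:
  assumes S: "S = cfg V M" and z0: "z0 \<in> S" and xs: "\<xi>s \<in> S"
    and reach: "\<forall>\<xi>\<in>S. (\<xi>, \<xi>s) \<in> (Rel E)\<^sup>*"
    and \<pi>0: "\<forall>\<xi>\<in>S. \<pi> \<xi> \<ge> 0" and \<pi>1: "(\<Sum>\<xi>\<in>S. \<pi> \<xi>) = 1"
    and \<pi>: "\<forall>\<eta>\<in>S. (\<Sum>\<xi>\<in>S. \<pi> \<xi> * pmf (saving_step E \<xi>) \<eta>) = \<pi> \<eta>"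
  shows "(\<lambda>t. \<Sum>\<xi>\<in>S. \<bar>pmf (saving_dist E z0 t) \<xi> - \<pi> \<xi>\<bar>) \<longlonglongrightarrow> 0"
proof -
  have fS: "finite S" using S cfg_finite[OF finV] by simp
  define D where "D t = (\<Sum>\<xi>\<in>S. \<bar>pmf (saving_dist E z0 t) \<xi> - \<pi> \<xi>\<bar>)" for t
  define kk where "kk \<xi> = (SOME k. (\<xi>, \<xi>s) \<in> (Rel E) ^^ k)" for \<xi>
  have kk: "(\<xi>, \<xi>s) \<in> (Rel E) ^^ kk \<xi>" if "\<xi> \<in> S" for \<xi>
  proof -
    have "(\<xi>, \<xi>s) \<in> (Rel E)\<^sup>*" using reach that by blast
    then obtain k where "(\<xi>, \<xi>s) \<in> (Rel E) ^^ k" unfolding rtrancl_power by blast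
    then show ?thesis unfolding kk_def by (rule someI)
  qed
  define K where "K = Suc (Max (kk ` S))"
  have K0: "K > 0" unfolding K_def by simp
  have RK: "(\<xi>, \<xi>s) \<in> (Rel E) ^^ K" if "\<xi> \<in> S" for \<xi>
  proof -
    have "kk \<xi> \<le> Max (kk ` S)" using fS that by (intro Max_ge) auto
    then have "kk \<xi> \<le> K" unfolding K_def by simp
    then show ?thesis using relpow_pad[OF kk[OF that]] by blast
  qed
  define Q where "Q \<xi> \<eta> = pmf (saving_dist E \<xi> K) \<eta>" for \<xi> \<eta>
  define \<delta> where "\<delta> = Min ((\<lambda>\<xi>. Q \<xi> \<xi>s) ` S)"
  have Qpos: "Q \<xi> \<xi>s > 0" if "\<xi> \<in> S" for \<xi>
    using relpow_set[OF RK[OF that]] unfolding Q_def set_pmf_iff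
    by (simp add: order_less_le pmf_nonneg)
  have \<delta>pos: "\<delta> > 0" unfolding \<delta>_def using fS xs Qpos by (subst Min_gr_iff) auto
  have \<delta>le: "\<delta> \<le> Q \<xi> \<xi>s" if "\<xi> \<in> S" for \<xi> unfolding \<delta>_def using fS that by (intro Min_le) auto
  have \<delta>1: "\<delta> \<le> 1" using \<delta>le[OF xs] pmf_le_1 unfolding Q_def by (meson order_trans)
  have Qrow: "(\<Sum>\<eta>\<in>S. Q \<xi> \<eta>) = 1" if "\<xi> \<in> S" for \<xi>
    unfolding Q_def using fS set_dist that S by (intro sum_pmf_eq_1) auto
  have Qnn: "Q \<xi> \<eta> \<ge> 0" for \<xi> \<eta> unfolding Q_def by simp
  have \<pi>K: "(\<Sum>\<xi>\<in>S. \<pi> \<xi> * Q \<xi> \<eta>) = \<pi> \<eta>" if "\<eta> \<in> S" for \<eta>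
    unfolding Q_def using stationary_k[OF S \<pi> that] .
  have p1: "(\<Sum>\<xi>\<in>S. pmf (saving_dist E z0 t) \<xi>) = 1" for t
    using fS set_dist z0 S by (intro sum_pmf_eq_1) auto
  have pK: "pmf (saving_dist E z0 (t + K)) \<eta> = (\<Sum>\<xi>\<in>S. pmf (saving_dist E z0 t) \<xi> * Q \<xi> \<eta>)" for t \<eta>
    unfolding dist_add Q_def using fS set_dist z0 S by (intro pmf_bind_fin) auto
  have contr: "D (t + K) \<le> (1 - \<delta>) * D t" for t
  proof -
    define d where "d \<xi> = pmf (saving_dist E z0 t) \<xi> - \<pi> \<xi>" for \<xi>
    define Q' where "Q' \<xi> \<eta> = Q \<xi> \<eta> - (if \<eta> = \<xi>s then \<delta> else 0)" for \<xi> \<eta>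
    have d0: "(\<Sum>\<xi>\<in>S. d \<xi>) = 0" unfolding d_def using p1 \<pi>1 by (simp add: sum_subtractf)
    have Q'nn: "Q' \<xi> \<eta> \<ge> 0" if "\<xi> \<in> S" for \<xi> \<eta>
      unfolding Q'_def using \<delta>le[OF that] Qnn by auto
    have Q'row: "(\<Sum>\<eta>\<in>S. Q' \<xi> \<eta>) = 1 - \<delta>" if "\<xi> \<in> S" for \<xi>
      unfolding Q'_def using Qrow[OF that] fS xs by (simp add: sum_subtractf)
    have eq: "pmf (saving_dist E z0 (t + K)) \<eta> - \<pi> \<eta> = (\<Sum>\<xi>\<in>S. d \<xi> * Q' \<xi> \<eta>)" if "\<eta> \<in> S" for \<eta>
    proof -
      have "(\<Sum>\<xi>\<in>S. d \<xi> * Q' \<xi> \<eta>) = (\<Sum>\<xi>\<in>S. d \<xi> * Q \<xi> \<eta>) - (\<Sum>\<xi>\<in>S. d \<xi>) * (if \<eta> = \<xi>s then \<delta> else 0)"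
        unfolding Q'_def by (simp add: algebra_simps sum_subtractf sum_distrib_right)
      also have "\<dots> = (\<Sum>\<xi>\<in>S. d \<xi> * Q \<xi> \<eta>)" using d0 by simp
      also have "\<dots> = pmf (saving_dist E z0 (t + K)) \<eta> - \<pi> \<eta>"
        unfolding pK d_def using \<pi>K[OF that] by (simp add: algebra_simps sum_subtractf)
      finally show ?thesis by simp
    qed
    have "D (t + K) = (\<Sum>\<eta>\<in>S. \<bar>\<Sum>\<xi>\<in>S. d \<xi> * Q' \<xi> \<eta>\<bar>)"
      unfolding D_def by (intro sum.cong refl) (simp add: eq)
    also have "\<dots> \<le> (\<Sum>\<eta>\<in>S. \<Sum>\<xi>\<in>S. \<bar>d \<xi>\<bar> * Q' \<xi> \<eta>)"
    proof (intro sum_mono)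
      fix \<eta> assume "\<eta> \<in> S"
      have "\<bar>\<Sum>\<xi>\<in>S. d \<xi> * Q' \<xi> \<eta>\<bar> \<le> (\<Sum>\<xi>\<in>S. \<bar>d \<xi> * Q' \<xi> \<eta>\<bar>)" by (rule sum_abs)
      also have "\<dots> = (\<Sum>\<xi>\<in>S. \<bar>d \<xi>\<bar> * Q' \<xi> \<eta>)"
        by (intro sum.cong refl) (simp add: abs_mult Q'nn)
      finally show "\<bar>\<Sum>\<xi>\<in>S. d \<xi> * Q' \<xi> \<eta>\<bar> \<le> (\<Sum>\<xi>\<in>S. \<bar>d \<xi>\<bar> * Q' \<xi> \<eta>)" .
    qed
    also have "\<dots> = (\<Sum>\<xi>\<in>S. \<bar>d \<xi>\<bar> * (\<Sum>\<eta>\<in>S. Q' \<xi> \<eta>))"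
      by (unfold sum_distrib_left, subst sum.swap, rule refl)
    also have "\<dots> = (\<Sum>\<xi>\<in>S. \<bar>d \<xi>\<bar> * (1 - \<delta>))"
      by (intro sum.cong refl) (simp add: Q'row)
    also have "\<dots> = (1 - \<delta>) * D t" unfolding D_def d_def by (subst sum_distrib_right[symmetric]) (simp add: mult.commute)
    finally show ?thesis .
  qed
  have Dnn: "D t \<ge> 0" for t unfolding D_def by (simp add: sum_nonneg)
  have D2: "D t \<le> 2" for t
  proof -
    have "D t \<le> (\<Sum>\<xi>\<in>S. pmf (saving_dist E z0 t) \<xi> + \<pi> \<xi>)"
      unfolding D_def by (intro sum_mono) (use \<pi>0 in \<open>auto simp: abs_le_iff pmf_nonneg\<close>)
    also have "\<dots> = 2" using p1 \<pi>1 by (simp add: sum.distrib)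
    finally show ?thesis .
  qed
  have Dn: "D (t + n * K) \<le> (1 - \<delta>) ^ n * D t" for t n
  proof (induction n)
    case 0 then show ?case by simp
  next
    case (Suc n)
    have "D (t + Suc n * K) = D ((t + n * K) + K)" by (simp add: algebra_simps)
    also have "\<dots> \<le> (1 - \<delta>) * D (t + n * K)" by (rule contr)
    also have "\<dots> \<le> (1 - \<delta>) * ((1 - \<delta>) ^ n * D t)"
      using Suc \<delta>1 by (intro mult_left_mono) auto
    finally show ?case by simp
  qed
  have bound: "D t \<le> 2 * (1 - \<delta>) ^ (t div K)" for t
  proof -
    have "D t = D (t mod K + (t div K) * K)" by simp
    also have "\<dots> \<le> (1 - \<delta>) ^ (t div K) * D (t mod K)" by (rule Dn)
    also have "\<dots> \<le> (1 - \<delta>) ^ (t div K) * 2" using D2 \<delta>1 by (intro mult_left_mono) auto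
    finally show ?thesis by simp
  qed
  have divlim: "filterlim (\<lambda>t. t div K) at_top sequentially"
    unfolding filterlim_at_top eventually_sequentially
  proof
    fix Z show "\<exists>N. \<forall>n\<ge>N. Z \<le> n div K"
      by (rule exI[of _ "Z * K"]) (simp add: less_eq_div_iff_mult_less_eq K0)
  qed
  have "(\<lambda>n. (1 - \<delta>) ^ n) \<longlonglongrightarrow> 0" using \<delta>pos \<delta>1 by (intro LIMSEQ_power_zero) simp
  then have "(\<lambda>t. (1 - \<delta>) ^ (t div K)) \<longlonglongrightarrow> 0" by (rule filterlim_compose[OF _ divlim])
  then have lim2: "(\<lambda>t. 2 * (1 - \<delta>) ^ (t div K)) \<longlonglongrightarrow> 0" using tendsto_mult_right_zero by blast
  have "D \<longlonglongrightarrow> 0"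
    by (rule tendsto_sandwich[OF _ _ tendsto_const lim2]) (auto simp: Dnn bound)
  then show ?thesis unfolding D_def .
qed

end


theorem theorem3:
  fixes V :: "'a set" and E :: "('a \<times> 'a) set" and N M :: nat and z0 :: "'a \<Rightarrow> nat"
    and x :: 'a and c :: nat
  assumes "simple_connected_graph V E"
    and "card V = N" and "N \<ge> 2"
    and "\<forall>v. v \<notin> V \<longrightarrow> z0 v = 0" and "(\<Sum>v\<in>V. z0 v) = M"
    and "x \<in> V" and "c \<le> M"
  shows "(\<lambda>t. measure_pmf.prob (saving_dist E z0 t) {z. z x = c})
           \<longlonglongrightarrow> real (c + 1) * real ((M - c + 2 * N - 3) choose (2 * N - 3))
                 / real ((M + 2 * N - 1) choose (2 * N - 1))"
proof -
  note G = assms(1)[unfolded simple_connected_graph_def]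
  have finV: "finite V" and EV: "E \<subseteq> V \<times> V" and irr: "\<forall>(a, b)\<in>E. a \<noteq> b"
    and conn: "\<forall>u\<in>V. \<forall>v\<in>V. (u, v) \<in> (E \<union> E\<inverse>)\<^sup>*"
    using G by auto
  have "card V > 1" using assms(2,3) by simp
  then obtain y where y: "y \<in> V" "y \<noteq> x"
    using assms(6) by (metis card_le_Suc0_iff_eq finV not_le One_nat_def)
  have Ene: "E \<noteq> {}"
  proof
    assume "E = {}"
    then have "(x, y) \<in> Id" using conn assms(6) y by auto
    then show False using y by simp
  qed
  interpret sm V E using finV EV irr Ene by unfold_locales
  define S where "S = cfg V M"
  have fS: "finite S" unfolding S_def by (rule cfg_finite[OF finV])
  have z0S: "z0 \<in> S" unfolding S_def cfg_def using assms(4,5) by auto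
  define \<xi>s where "\<xi>s = (\<lambda>_::'a. 0::nat)(x := M)"
  have reach: "\<forall>\<xi>\<in>S. (\<xi>, \<xi>s) \<in> (Rel E)\<^sup>*"
    unfolding S_def \<xi>s_def using reach_star[OF finV EV irr Ene _ assms(6)] conn assms(6) by blast
  have xsS: "\<xi>s \<in> S" using Rel_star_cfg[OF finV EV irr Ene] reach z0S unfolding S_def by blast
  define W where "W = (\<Sum>z\<in>S. wt V z)"
  have Vne: "V \<noteq> {}" using assms(6) by auto
  have Wv: "W = (M + 2 * N - 1) choose (2 * N - 1)"
    unfolding W_def S_def using wt_total[OF finV Vne] assms(2) by simp
  have Wpos: "W > 0" unfolding Wv by simp
  define \<pi> where "\<pi> z = real (wt V z) / real W" for z
  have \<pi>0: "\<forall>\<xi>\<in>S. \<pi> \<xi> \<ge> 0" unfolding \<pi>_def by simp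
  have \<pi>1: "(\<Sum>\<xi>\<in>S. \<pi> \<xi>) = 1"
  proof -
    have e: "(\<Sum>\<xi>\<in>S. real (wt V \<xi>)) = real W" unfolding W_def by (simp add: of_nat_sum)
    show ?thesis unfolding \<pi>_def sum_divide_distrib[symmetric] e using Wpos by simp
  qed
  have \<pi>st: "\<forall>\<eta>\<in>S. (\<Sum>\<xi>\<in>S. \<pi> \<xi> * pmf (saving_step E \<xi>) \<eta>) = \<pi> \<eta>"
  proof
    fix \<eta> assume \<eta>: "\<eta> \<in> S"
    have "(\<Sum>\<xi>\<in>S. \<pi> \<xi> * pmf (saving_step E \<xi>) \<eta>) = (\<Sum>\<xi>\<in>S. real (wt V \<xi>) * pmf (saving_step E \<xi>) \<eta>) / real W"
      unfolding \<pi>_def by (simp add: sum_divide_distrib)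
    also have "\<dots> = (\<Sum>\<xi>\<in>S. real (wt V \<eta>) * pmf (saving_step E \<eta>) \<xi>) / real W"
      using step_balance[OF finV EV irr Ene] by simp
    also have "\<dots> = real (wt V \<eta>) * (\<Sum>\<xi>\<in>S. pmf (saving_step E \<eta>) \<xi>) / real W"
      by (simp add: sum_distrib_left)
    also have "(\<Sum>\<xi>\<in>S. pmf (saving_step E \<eta>) \<xi>) = 1"
      using set_step_cfg \<eta> fS unfolding S_def by (intro sum_pmf_eq_1) auto
    finally show "(\<Sum>\<xi>\<in>S. \<pi> \<xi> * pmf (saving_step E \<xi>) \<eta>) = \<pi> \<eta>" unfolding \<pi>_def by simp
  qed
  have D: "(\<lambda>t. \<Sum>\<xi>\<in>S. \<bar>pmf (saving_dist E z0 t) \<xi> - \<pi> \<xi>\<bar>) \<longlonglongrightarrow> 0"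
    using converge[OF S_def z0S xsS reach \<pi>0 \<pi>1 \<pi>st] .
  define A where "A = {z::'a \<Rightarrow> nat. z x = c}"
  define T where "T = (\<Sum>\<xi>\<in>S \<inter> A. \<pi> \<xi>)"
  have prob: "measure_pmf.prob (saving_dist E z0 t) A = (\<Sum>\<xi>\<in>S \<inter> A. pmf (saving_dist E z0 t) \<xi>)" for t
  proof -
    let ?p = "saving_dist E z0 t"
    have sub: "set_pmf ?p \<subseteq> S" using set_dist z0S unfolding S_def by auto
    have "measure_pmf.prob ?p A = measure_pmf.prob ?p (A \<inter> set_pmf ?p)" by (simp add: measure_Int_set_pmf)
    also have "A \<inter> set_pmf ?p = (S \<inter> A) \<inter> set_pmf ?p" using sub by auto
    also have "measure_pmf.prob ?p \<dots> = measure_pmf.prob ?p (S \<inter> A)" by (simp add: measure_Int_set_pmf)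
    also have "\<dots> = (\<Sum>\<xi>\<in>S \<inter> A. pmf ?p \<xi>)" using fS by (simp add: measure_measure_pmf_finite)
    finally show ?thesis .
  qed
  have le: "norm (measure_pmf.prob (saving_dist E z0 t) A - T) \<le> (\<Sum>\<xi>\<in>S. \<bar>pmf (saving_dist E z0 t) \<xi> - \<pi> \<xi>\<bar>)" for t
  proof -
    have "norm (measure_pmf.prob (saving_dist E z0 t) A - T) = \<bar>\<Sum>\<xi>\<in>S \<inter> A. pmf (saving_dist E z0 t) \<xi> - \<pi> \<xi>\<bar>"
      unfolding prob T_def by (simp add: sum_subtractf)
    also have "\<dots> \<le> (\<Sum>\<xi>\<in>S \<inter> A. \<bar>pmf (saving_dist E z0 t) \<xi> - \<pi> \<xi>\<bar>)" by (rule sum_abs)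
    also have "\<dots> \<le> (\<Sum>\<xi>\<in>S. \<bar>pmf (saving_dist E z0 t) \<xi> - \<pi> \<xi>\<bar>)"
      using fS by (intro sum_mono2) auto
    finally show ?thesis .
  qed
  have lim: "(\<lambda>t. measure_pmf.prob (saving_dist E z0 t) A) \<longlonglongrightarrow> T"
    by (rule LIM_zero_cancel, rule Lim_null_comparison[OF _ D]) (use le in auto)
  have Tv: "T = real (c + 1) * real ((M - c + 2 * N - 3) choose (2 * N - 3)) / real ((M + 2 * N - 1) choose (2 * N - 1))"
  proof -
    have "T = real (\<Sum>\<xi>\<in>S \<inter> A. wt V \<xi>) / real W"
      unfolding T_def \<pi>_def by (simp add: sum_divide_distrib)
    also have "(\<Sum>\<xi>\<in>S \<inter> A. wt V \<xi>) = (c + 1) * (\<Sum>\<zeta>\<in>cfg (V - {x}) (M - c). wt (V - {x}) \<zeta>)"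
      unfolding S_def A_def by (rule wt_marg[OF finV assms(6,7)])
    also have "(\<Sum>\<zeta>\<in>cfg (V - {x}) (M - c). wt (V - {x}) \<zeta>) = (M - c + 2 * card (V - {x}) - 1) choose (2 * card (V - {x}) - 1)"
      using finV y by (intro wt_total) auto
    also have "card (V - {x}) = N - 1" using assms(2,6) finV by simp
    also have "M - c + 2 * (N - 1) - 1 = M - c + 2 * N - 3" using assms(3) by simp
    also have "2 * (N - 1) - 1 = 2 * N - 3" using assms(3) by simp
    finally show ?thesis unfolding Wv by (simp add: algebra_simps)
  qed
  show ?thesis using lim unfolding A_def Tv .
qed


end
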